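(* Let $n\ge 1$, $D\ge 1$, and let $X_n=\{\mathbf{x}^0,\ldots,\mathbf{x}^{n-1}\}\subseteq\{0,1\}^D$ consist of $n$ pairwise distinct vectors. Let $d=2\lceil\log_2 n\rceil$. Then there exist subsets $S_0,\ldots,S_{d-1}\subseteq\{0,\ldots,D-1\}$ such that the map $\mathbf{f}:\{0,1\}^D\to\{0,1\}^d$ defined by $f_k(\mathbf{x})=\bigoplus_{\ell\in S_k}x_\ell$ (the parity of the entries of $\mathbf{x}$ indexed by $S_k$) satisfies $\mathbf{f}(\mathbf{x}^i)\ne\mathbf{f}(\mathbf{x}^j)$ for all $i\ne j$.
   Context: Such an $\mathbf{f}$ is a two-layer network whose activation functions are parity functions of subsets of the input variables. *)

theory Defs
  imports Complex_Main
begin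

text \<open>A vector in {0,1}^D is modelled as a function nat => bool, of which only
  coordinates 0..D-1 are relevant. The parity of the entries of x indexed by S.\<close>
definition parity :: "nat set \<Rightarrow> (nat \<Rightarrow> bool) \<Rightarrow> bool" where
  "parity S x = odd (card {l \<in> S. x l})"

end

theory Submission
  imports Defs
begin

lemma parity_insert:
  assumes "finite S" "y \<notin> S"
  shows "parity (insert y S) a = (if a y then \<not> parity S a else parity S a)"
proof -
  have "{l \<in> insert y S. a l} = (if a y then insert y {l \<in> S. a l} else {l \<in> S. a l})"
    by auto
  moreover have "finite {l \<in> S. a l}" using assms by simp
  ultimately show ?thesis using assms unfolding parity_def by auto
qed

lemma parity_xor:
  assumes "finite S"
  shows "parity S (\<lambda>l. a l \<noteq> b l) = (parity S a \<noteq> parity S b)"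
  using assms
proof (induction S rule: finite_induct)
  case empty
  then show ?case by (simp add: parity_def)
next
  case (insert y S)
  then show ?case by (cases "a y"; cases "b y") (simp_all add: parity_insert)
qed

lemma parity_flip:
  assumes "finite S" "v l"
  shows "parity (if l \<in> S then S - {l} else insert l S) v = (\<not> parity S v)"
proof (cases "l \<in> S")
  case True
  then have S: "S = insert l (S - {l})" by auto
  have "parity S v = (\<not> parity (S - {l}) v)"
    using parity_insert[of "S - {l}" l v] assms S by (metis Diff_iff finite_Diff insertI1)
  then show ?thesis using True by simp
next
  case False
  then show ?thesis using parity_insert[of S l v] assms by simp
qed

lemma half_count:
  assumes "l < D" "v l"
  shows "card {S \<in> Pow {0..<D}. \<not> parity S v} * 2 = 2 ^ D"
proof -
  define g where "g = (\<lambda>S. if l \<in> S then S - {l} else insert l S)"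
  define E where "E = {S \<in> Pow {0..<D}. \<not> parity S v}"
  define Od where "Od = {S \<in> Pow {0..<D}. parity S v}"
  have gg: "g (g S) = S" for S unfolding g_def by auto
  have gp: "parity (g S) v = (\<not> parity S v)" if "S \<subseteq> {0..<D}" for S
  proof -
    have "finite S" using that finite_subset by blast
    then show ?thesis unfolding g_def using parity_flip[of S v l] assms(2) by simp
  qed
  have gs: "S \<subseteq> {0..<D} \<Longrightarrow> g S \<subseteq> {0..<D}" for S
    unfolding g_def using assms by auto
  have "bij_betw g E Od"
  proof (rule bij_betw_byWitness[where f' = g])
    show "\<forall>a\<in>E. g (g a) = a" using gg by simp
    show "\<forall>a\<in>Od. g (g a) = a" using gg by simp
    show "g ` E \<subseteq> Od" unfolding E_def Od_def using gp gs by auto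
    show "g ` Od \<subseteq> E" unfolding E_def Od_def using gp gs by auto
  qed
  then have "card E = card Od" by (rule bij_betw_same_card)
  moreover have "E \<union> Od = Pow {0..<D}" "E \<inter> Od = {}" unfolding E_def Od_def by auto
  moreover have "finite E" "finite Od" unfolding E_def Od_def by auto
  ultimately have "card E + card Od = card (Pow {0..<D})"
    using card_Un_disjoint[of E Od] by simp
  then have "card E + card Od = 2 ^ D" by (simp add: card_Pow)
  then show ?thesis using \<open>card E = card Od\<close> unfolding E_def by simp
qed

lemma good_set:
  assumes "finite P" "D \<ge> 1" "\<forall>v\<in>P. \<exists>l<D. v l" "card P < 2 ^ Suc m"
  shows "\<exists>T \<subseteq> {0..<D}. card {v \<in> P. \<not> parity T v} < 2 ^ m"
proof (rule ccontr)
  assume "\<not> ?thesis"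
  then have ge: "\<forall>T \<in> Pow {0..<D}. 2 ^ m \<le> card {v \<in> P. \<not> parity T v}" by auto
  let ?F = "Pow {0..<D}"
  have "(\<Sum>T\<in>?F. 2 ^ m) \<le> (\<Sum>T\<in>?F. card {v \<in> P. \<not> parity T v})"
    using ge by (intro sum_mono) auto
  also have "\<dots> = (\<Sum>T\<in>?F. \<Sum>v\<in>P. if \<not> parity T v then 1 else (0::nat))"
    using assms(1) by (intro sum.cong refl) (simp add: sum.inter_filter[symmetric])
  also have "\<dots> = (\<Sum>v\<in>P. \<Sum>T\<in>?F. if \<not> parity T v then 1 else (0::nat))"
    by (rule sum.swap)
  also have "\<dots> = (\<Sum>v\<in>P. card {T \<in> ?F. \<not> parity T v})"
    by (intro sum.cong refl) (simp add: sum.inter_filter[symmetric])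
  also have "\<dots> = (\<Sum>v\<in>P. 2 ^ (D - 1))"
  proof (rule sum.cong)
    fix v assume "v \<in> P"
    then obtain l where "l < D" "v l" using assms(3) by auto
    from half_count[of l D v, OF this] have "card {T \<in> ?F. \<not> parity T v} * 2 = 2 ^ (D - 1) * 2"
      using assms(2) by (metis One_nat_def Suc_diff_le diff_Suc_1 power_Suc2)
    then show "card {T \<in> ?F. \<not> parity T v} = 2 ^ (D - 1)" by simp
  qed simp
  finally have "2 ^ D * 2 ^ m \<le> card P * 2 ^ (D - 1)" by (simp add: card_Pow)
  moreover have "card P * 2 ^ (D - 1) < 2 ^ Suc m * 2 ^ (D - 1)"
    using assms(4) by (intro mult_strict_right_mono) auto
  moreover have "(2::nat) ^ Suc m * 2 ^ (D - 1) = 2 ^ D * 2 ^ m"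
  proof -
    obtain D' where "D = Suc D'" using assms(2) by (cases D) auto
    then show ?thesis by (simp add: algebra_simps)
  qed
  ultimately show False by linarith
qed

lemma cover:
  assumes "finite P" "D \<ge> 1" "\<forall>v\<in>P. \<exists>l<D. v l" "card P < 2 ^ m"
  shows "\<exists>S. (\<forall>k<m. S k \<subseteq> {0..<D}) \<and> (\<forall>v\<in>P. \<exists>k<m. parity (S k) v)"
  using assms
proof (induction m arbitrary: P)
  case 0
  then have "P = {}" by simp
  then show ?case by auto
next
  case (Suc m)
  obtain T where T: "T \<subseteq> {0..<D}" "card {v \<in> P. \<not> parity T v} < 2 ^ m"
    using good_set[OF Suc.prems] by blast
  obtain S where S: "\<forall>k<m. S k \<subseteq> {0..<D}" "\<forall>v\<in>{v \<in> P. \<not> parity T v}. \<exists>k<m. parity (S k) v"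
    using Suc.IH[of "{v \<in> P. \<not> parity T v}"] Suc.prems T by auto
  define S' where "S' = (\<lambda>k. if k = m then T else S k)"
  have "\<forall>k<Suc m. S' k \<subseteq> {0..<D}" using S T unfolding S'_def by auto
  moreover have "\<forall>v\<in>P. \<exists>k<Suc m. parity (S' k) v"
  proof
    fix v assume "v \<in> P"
    show "\<exists>k<Suc m. parity (S' k) v"
    proof (cases "parity T v")
      case True then show ?thesis by (intro exI[of _ m]) (simp add: S'_def)
    next
      case False
      then obtain k where "k < m" "parity (S k) v" using S \<open>v \<in> P\<close> by auto
      then show ?thesis by (intro exI[of _ k]) (simp add: S'_def)
    qed
  qed
  ultimately show ?case by blast
qed

lemma pow_bound:
  assumes "n \<ge> (1::nat)"
  shows "n * n < 2 ^ nat (2 * \<lceil>log 2 (real n)\<rceil>) \<or> n * n = 2 ^ nat (2 * \<lceil>log 2 (real n)\<rceil>)"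
proof -
  let ?c = "\<lceil>log 2 (real n)\<rceil>"
  have "log 2 (real n) \<ge> 0" using assms by simp
  then have c0: "?c \<ge> 0" by simp
  have "real n = 2 powr log 2 (real n)" using assms by simp
  also have "\<dots> \<le> 2 powr (real_of_int ?c)" by (intro powr_mono) auto
  also have "\<dots> = 2 ^ nat ?c" using c0 by (simp add: powr_realpow[symmetric])
  finally have "real n \<le> 2 ^ nat ?c" .
  then have n: "n \<le> 2 ^ nat ?c"
    by (metis of_nat_le_iff of_nat_numeral of_nat_power)
  have eq: "nat (2 * ?c) = nat ?c + nat ?c" using c0 by simp
  have e: "(2::nat) ^ nat (2 * ?c) = 2 ^ nat ?c * 2 ^ nat ?c"
    unfolding eq by (rule power_add)
  have "n * n \<le> 2 ^ nat ?c * 2 ^ nat ?c" by (rule mult_le_mono[OF n n])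
  then have "n * n \<le> 2 ^ nat (2 * ?c)" unfolding e .
  then show ?thesis by (simp only: le_less)
qed

theorem theorem8:
  fixes n D :: nat and x :: "nat \<Rightarrow> nat \<Rightarrow> bool"
  assumes "n \<ge> 1" and "D \<ge> 1"
    and distinct: "\<And>i j. i < n \<Longrightarrow> j < n \<Longrightarrow> i \<noteq> j \<Longrightarrow> (\<exists>l<D. x i l \<noteq> x j l)"
  shows "\<exists>S :: nat \<Rightarrow> nat set.
           (\<forall>k < nat (2 * \<lceil>log 2 (real n)\<rceil>). S k \<subseteq> {0..<D}) \<and>
           (\<forall>i<n. \<forall>j<n. i \<noteq> j \<longrightarrow>
              (\<exists>k < nat (2 * \<lceil>log 2 (real n)\<rceil>). parity (S k) (x i) \<noteq> parity (S k) (x j)))"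
proof -
  let ?d = "nat (2 * \<lceil>log 2 (real n)\<rceil>)"
  define Q where "Q = {(i, j). i < n \<and> j < n \<and> i \<noteq> j}"
  define P where "P = (\<lambda>(i, j). \<lambda>l. x i l \<noteq> x j l) ` Q"
  have Qsub: "Q \<subset> {..<n} \<times> {..<n}"
    unfolding Q_def using assms(1) by auto
  then have "card Q < card ({..<n} \<times> {..<n})"
    by (intro psubset_card_mono) auto
  then have "card Q < n * n" by (simp add: card_cartesian_product)
  moreover have "finite Q" using Qsub finite_subset by blast
  ultimately have "card P < n * n" unfolding P_def using card_image_le le_less_trans by blast
  then have cP: "card P < 2 ^ ?d" using pow_bound[OF assms(1)] by auto
  have fP: "finite P" unfolding P_def using \<open>finite Q\<close> by simp
  have nz: "\<forall>v\<in>P. \<exists>l<D. v l" unfolding P_def Q_def using distinct by auto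
  obtain S where S: "\<forall>k<?d. S k \<subseteq> {0..<D}" "\<forall>v\<in>P. \<exists>k<?d. parity (S k) v"
    using cover[OF fP assms(2) nz cP] by blast
  have "\<forall>i<n. \<forall>j<n. i \<noteq> j \<longrightarrow> (\<exists>k < ?d. parity (S k) (x i) \<noteq> parity (S k) (x j))"
  proof (intro allI impI)
    fix i j assume ij: "i < n" "j < n" "i \<noteq> j"
    then have "(\<lambda>l. x i l \<noteq> x j l) \<in> P" unfolding P_def Q_def by force
    then obtain k where k: "k < ?d" "parity (S k) (\<lambda>l. x i l \<noteq> x j l)" using S by blast
    have "finite (S k)" using S(1) k(1) finite_subset by blast
    then show "\<exists>k < ?d. parity (S k) (x i) \<noteq> parity (S k) (x j)"
      using k parity_xor by blast
  qed
  then show ?thesis using S(1) by blast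
qed

end
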